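(* Let $(E,\rho)$ be a weighted space and $\ell:\mathscr{B}^\rho(E)\to\mathbb{R}$ a continuous linear functional. Then $\ell$ is a smooth algebra homomorphism if and only if there exists $x\in E$ with $\ell(f)=f(x)$ for all $f\in\mathscr{B}^\rho(E)$. The point $x$ is uniquely determined by $\ell$.
   Context: A weighted space is a pair $(E,\rho)$ where $E$ is a completely regular Hausdorff topological space and $\rho:E\to(0,\infty)$ is an admissible weight function, meaning that for every $R\ge 0$ the sublevel set $K_R:=\{x\in E:\rho(x)\le R\}$ is compact. For $f:E\to\mathbb{R}$ put $\|f\|_\rho:=\sup_{x\in E}|f(x)|/\rho(x)$; $\mathscr{B}^\rho(E)$ denotes the closure of $C_b(E)$ with respect to $\|\cdot\|_\rho$ inside $\{f:E\to\mathbb{R}:\|f\|_\rho<\infty\}$. A continuous linear functional $\ell$ on $\mathscr{B}^\rho(E)$ is a smooth algebra homomorphism if for every $n$, every bounded smooth $\phi:\mathbb{R}^n\to\mathbb{R}$ and all $f_1,\dots,f_n\in\mathscr{B}^\rho(E)$ one has $\ell(\phi(f_1(\cdot),\dots,f_n(\cdot)))=\phi(\ell(f_1),\dots,\ell(f_n))$. *)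

theory Defs
  imports "HOL-Analysis.Analysis"
begin

definition weighted_space :: "'a topology \<Rightarrow> ('a \<Rightarrow> real) \<Rightarrow> bool" where
  "weighted_space X \<rho> \<longleftrightarrow>
     completely_regular_space X \<and> Hausdorff_space X \<and>
     (\<forall>x\<in>topspace X. \<rho> x > 0) \<and>
     (\<forall>R\<ge>0. compactin X {x \<in> topspace X. \<rho> x \<le> R})"

text \<open>Weighted sup norm (sup over E of |f x| / rho x; 0 is included so the
  value for empty E is 0; all the quotients are nonnegative anyway).\<close>
definition wnorm :: "'a topology \<Rightarrow> ('a \<Rightarrow> real) \<Rightarrow> ('a \<Rightarrow> real) \<Rightarrow> real" where
  "wnorm X \<rho> f = Sup (insert 0 ((\<lambda>x. \<bar>f x\<bar> / \<rho> x) ` topspace X))"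

definition wbounded :: "'a topology \<Rightarrow> ('a \<Rightarrow> real) \<Rightarrow> ('a \<Rightarrow> real) \<Rightarrow> bool" where
  "wbounded X \<rho> f \<longleftrightarrow> bounded ((\<lambda>x. \<bar>f x\<bar> / \<rho> x) ` topspace X)"

definition Cb :: "'a topology \<Rightarrow> ('a \<Rightarrow> real) set" where
  "Cb X = {g. continuous_map X euclideanreal g \<and> bounded (g ` topspace X)}"

definition Brho :: "'a topology \<Rightarrow> ('a \<Rightarrow> real) \<Rightarrow> ('a \<Rightarrow> real) set" where
  "Brho X \<rho> = {f. wbounded X \<rho> f \<and>
      (\<forall>\<epsilon>>0. \<exists>g\<in>Cb X. wbounded X \<rho> (\<lambda>x. f x - g x) \<and> wnorm X \<rho> (\<lambda>x. f x - g x) < \<epsilon>)}"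

definition cont_lin_functional ::
    "'a topology \<Rightarrow> ('a \<Rightarrow> real) \<Rightarrow> (('a \<Rightarrow> real) \<Rightarrow> real) \<Rightarrow> bool" where
  "cont_lin_functional X \<rho> L \<longleftrightarrow>
     (\<forall>f\<in>Brho X \<rho>. \<forall>g\<in>Brho X \<rho>. \<forall>a b::real.
        L (\<lambda>x. a * f x + b * g x) = a * L f + b * L g) \<and>
     (\<exists>C. \<forall>f\<in>Brho X \<rho>. \<bar>L f\<bar> \<le> C * wnorm X \<rho> f)"

text \<open>Smooth functions R^n -> R. A point of R^n is encoded as a map
  nat => real of which only the coordinates 0..n-1 matter.\<close>
definition restr :: "nat \<Rightarrow> (nat \<Rightarrow> real) \<Rightarrow> (nat \<Rightarrow> real)" where
  "restr n v = (\<lambda>i. if i < n then v i else 0)"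

definition pdiff :: "nat \<Rightarrow> ((nat \<Rightarrow> real) \<Rightarrow> real) \<Rightarrow> (nat \<Rightarrow> real) \<Rightarrow> real" where
  "pdiff i \<phi> v = deriv (\<lambda>t. \<phi> (v(i := t))) (v i)"

fun iter_pdiff :: "nat list \<Rightarrow> ((nat \<Rightarrow> real) \<Rightarrow> real) \<Rightarrow> (nat \<Rightarrow> real) \<Rightarrow> real" where
  "iter_pdiff [] \<phi> = \<phi>"
| "iter_pdiff (i # is) \<phi> = pdiff i (iter_pdiff is \<phi>)"

text \<open>C^infinity: all iterated partial derivatives exist and are continuous
  (continuity w.r.t. the product topology on nat => real, which for functions
  depending only on the first n coordinates is continuity on R^n).\<close>
definition smooth_fun :: "nat \<Rightarrow> ((nat \<Rightarrow> real) \<Rightarrow> real) \<Rightarrow> bool" where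
  "smooth_fun n \<phi> \<longleftrightarrow>
     (\<forall>v. \<phi> v = \<phi> (restr n v)) \<and>
     (\<forall>is. set is \<subseteq> {..<n} \<longrightarrow>
        continuous_on UNIV (iter_pdiff is \<phi>) \<and>
        (\<forall>i<n. \<forall>v. (\<lambda>t. iter_pdiff is \<phi> (v(i := t))) differentiable (at (v i))))"

definition smooth_alg_hom ::
    "'a topology \<Rightarrow> ('a \<Rightarrow> real) \<Rightarrow> (('a \<Rightarrow> real) \<Rightarrow> real) \<Rightarrow> bool" where
  "smooth_alg_hom X \<rho> L \<longleftrightarrow>
     (\<forall>n \<phi> fs. smooth_fun n \<phi> \<and> bounded (range \<phi>) \<and> (\<forall>i<n. fs i \<in> Brho X \<rho>) \<and>
        (\<lambda>x. \<phi> (\<lambda>i. fs i x)) \<in> Brho X \<rho> \<longrightarrow>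
        L (\<lambda>x. \<phi> (\<lambda>i. fs i x)) = \<phi> (\<lambda>i. L (fs i)))"

end

theory Submission
  imports Defs
begin


lemma cos_comb_deriv:
  "((\<lambda>t. \<alpha> * cos (a * t - d) + \<beta> * sin (a * t - d)) has_real_derivative
       (\<beta> * a) * cos (a * s - d) + (- \<alpha> * a) * sin (a * s - d)) (at s)"
  by (auto intro!: derivative_eq_intros simp: algebra_simps)

lemma iter_pdiff_cos:
  assumes "set js \<subseteq> {..<1::nat}"
  shows "\<exists>\<alpha> \<beta>. iter_pdiff js (\<lambda>v. cos (a * v 0 - d)) = (\<lambda>v. \<alpha> * cos (a * v 0 - d) + \<beta> * sin (a * v 0 - d))"
  using assms
proof (induction js)
  case Nil
  show ?case by (rule exI[of _ 1], rule exI[of _ 0]) simp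
next
  case (Cons i js)
  then have i0: "i = 0" by auto
  from Cons obtain \<alpha> \<beta> where ab: "iter_pdiff js (\<lambda>v. cos (a * v 0 - d)) = (\<lambda>v. \<alpha> * cos (a * v 0 - d) + \<beta> * sin (a * v 0 - d))" by auto
  show ?case
    apply (rule exI[of _ "\<beta> * a"], rule exI[of _ "- \<alpha> * a"])
    apply (simp add: i0 ab pdiff_def fun_eq_iff)
    using DERIV_imp_deriv[OF cos_comb_deriv] by simp
qed

lemma smooth_cos: "smooth_fun 1 (\<lambda>v. cos (a * v 0 - d))"
proof -
  have A: "continuous_on UNIV (iter_pdiff js (\<lambda>v. cos (a * v 0 - d))) \<and>
        (\<forall>i<1. \<forall>v. (\<lambda>t. iter_pdiff js (\<lambda>v. cos (a * v 0 - d)) (v(i := t))) differentiable at (v i))"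
    if "set js \<subseteq> {..<1}" for js
  proof -
    from iter_pdiff_cos[OF that, of a d] obtain \<alpha> \<beta> where
      ab: "iter_pdiff js (\<lambda>v. cos (a * v 0 - d)) = (\<lambda>v. \<alpha> * cos (a * v 0 - d) + \<beta> * sin (a * v 0 - d))" by auto
    have c: "continuous_on UNIV (iter_pdiff js (\<lambda>v. cos (a * v 0 - d)))"
      unfolding ab by (intro continuous_intros) auto
    have "(\<lambda>t. iter_pdiff js (\<lambda>v. cos (a * v 0 - d)) (v(i := t))) differentiable at (v i)"
      if "i < 1" for i v
    proof -
      from that have "i = 0" by simp
      then show ?thesis
        unfolding ab real_differentiable_def using cos_comb_deriv[of \<alpha> a d \<beta> "v 0"] by auto
    qed
    with c show ?thesis by blast
  qed
  show ?thesis unfolding smooth_fun_def using A by (auto simp: restr_def)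
qed



lemma wbounded_iff:
  "wbounded X \<rho> f \<longleftrightarrow> (\<exists>B. \<forall>x\<in>topspace X. \<bar>\<bar>f x\<bar> / \<rho> x\<bar> \<le> B)"
  unfolding wbounded_def bounded_real by auto

lemma wboundedI:
  assumes "\<And>x. x \<in> topspace X \<Longrightarrow> \<rho> x > 0" "\<And>x. x \<in> topspace X \<Longrightarrow> \<bar>f x\<bar> / \<rho> x \<le> B"
  shows "wbounded X \<rho> f"
  unfolding wbounded_iff using assms by (intro exI[of _ B] ballI) (simp add: abs_of_pos)

lemma wnorm_le:
  assumes "\<And>x. x \<in> topspace X \<Longrightarrow> \<bar>f x\<bar> / \<rho> x \<le> M" "0 \<le> M"
  shows "wnorm X \<rho> f \<le> M"
  unfolding wnorm_def using assms by (intro cSup_least) auto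

lemma wnorm_ge:
  assumes "wbounded X \<rho> f" "x \<in> topspace X"
  shows "\<bar>f x\<bar> / \<rho> x \<le> wnorm X \<rho> f"
proof -
  have "bdd_above ((\<lambda>x. \<bar>f x\<bar> / \<rho> x) ` topspace X)"
    using assms(1) unfolding wbounded_def by (rule bounded_imp_bdd_above)
  then show ?thesis unfolding wnorm_def using assms(2) by (intro cSup_upper) auto
qed

lemma wnorm_nonneg:
  assumes "wbounded X \<rho> f"
  shows "0 \<le> wnorm X \<rho> f"
proof -
  have "bdd_above ((\<lambda>x. \<bar>f x\<bar> / \<rho> x) ` topspace X)"
    using assms(1) unfolding wbounded_def by (rule bounded_imp_bdd_above)
  then show ?thesis unfolding wnorm_def by (intro cSup_upper) auto
qed

lemma CbI:
  assumes "continuous_map X euclideanreal g" "\<And>x. x \<in> topspace X \<Longrightarrow> \<bar>g x\<bar> \<le> B"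
  shows "g \<in> Cb X"
  unfolding Cb_def bounded_real using assms by auto

lemma CbD:
  assumes "g \<in> Cb X"
  shows "continuous_map X euclideanreal g" "\<exists>B. \<forall>x\<in>topspace X. \<bar>g x\<bar> \<le> B"
  using assms unfolding Cb_def bounded_real by auto

lemma Cb_lin:
  assumes "f \<in> Cb X" "g \<in> Cb X"
  shows "(\<lambda>x. a * f x + b * g x) \<in> Cb X"
proof -
  obtain B1 B2 where B: "\<forall>x\<in>topspace X. \<bar>f x\<bar> \<le> B1" "\<forall>x\<in>topspace X. \<bar>g x\<bar> \<le> B2"
    using CbD assms by metis
  have "\<bar>a * f x + b * g x\<bar> \<le> \<bar>a\<bar> * B1 + \<bar>b\<bar> * B2" if "x \<in> topspace X" for x
  proof -
    have "\<bar>a * f x + b * g x\<bar> \<le> \<bar>a\<bar> * \<bar>f x\<bar> + \<bar>b\<bar> * \<bar>g x\<bar>"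
      by (metis abs_mult abs_triangle_ineq)
    also have "\<dots> \<le> \<bar>a\<bar> * B1 + \<bar>b\<bar> * B2"
      using B that by (intro add_mono mult_left_mono) auto
    finally show ?thesis .
  qed
  moreover have "continuous_map X euclideanreal (\<lambda>x. a * f x + b * g x)"
    using CbD(1)[OF assms(1)] CbD(1)[OF assms(2)]
    by (intro continuous_intros continuous_map_real_mult_left)
  ultimately show ?thesis by (intro CbI[where B="\<bar>a\<bar> * B1 + \<bar>b\<bar> * B2"]) auto
qed

lemma Cb_cos:
  assumes "g \<in> Cb X"
  shows "(\<lambda>x. cos (a * g x - d)) \<in> Cb X"
proof -
  have "continuous_map X euclideanreal (\<lambda>x. cos (a * g x - d))"
  proof -
    have h: "continuous_map X euclideanreal (\<lambda>x. a * g x - d)"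
      using CbD(1)[OF assms] by (intro continuous_intros continuous_map_real_mult_left)
    have c: "continuous_map euclideanreal euclideanreal cos"
      unfolding continuous_map_iff_continuous2 by (rule continuous_on_cos[OF continuous_on_id])
    from continuous_map_compose[OF h c] show ?thesis by (simp add: o_def)
  qed
  then show ?thesis by (rule CbI[where B=1]) auto
qed

lemma Cb_cos_pow:
  assumes "g \<in> Cb X"
  shows "(\<lambda>x. cos (a * g x - d) ^ k * cos (m * g x - e)) \<in> Cb X"
proof -
  have c1: "continuous_map X euclideanreal (\<lambda>x. cos (a * g x - d))"
    using Cb_cos[OF assms] CbD by blast
  have c2: "continuous_map X euclideanreal (\<lambda>x. cos (m * g x - e))"
    using Cb_cos[OF assms] CbD by blast
  have "continuous_map X euclideanreal (\<lambda>x. cos (a * g x - d) ^ k * cos (m * g x - e))"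
    using c1 c2 by (intro continuous_intros)
  moreover have "\<bar>cos (a * g x - d) ^ k * cos (m * g x - e)\<bar> \<le> 1" for x
  proof -
    have "\<bar>cos (a * g x - d)\<bar> ^ k \<le> 1" by (intro power_le_one) auto
    then show ?thesis unfolding abs_mult power_abs by (intro mult_le_one) auto
  qed
  ultimately show ?thesis by (intro CbI[where B=1]) auto
qed



lemma Cb_sum_lin:
  assumes lin: "\<And>f g a b. f \<in> Brho X \<rho> \<Longrightarrow> g \<in> Brho X \<rho> \<Longrightarrow> L (\<lambda>x. a * f x + b * g x) = a * L f + b * L g"
    and CbB: "\<And>g. g \<in> Cb X \<Longrightarrow> g \<in> Brho X \<rho>"
    and F: "finite F" and h: "\<And>x. x \<in> F \<Longrightarrow> h x \<in> Cb X"
  shows "(\<lambda>y. \<Sum>x\<in>F. h x y) \<in> Cb X \<and> L (\<lambda>y. \<Sum>x\<in>F. h x y) = (\<Sum>x\<in>F. L (h x))"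
  using F h
proof (induction F rule: finite_induct)
  case empty
  have z: "(\<lambda>y. 0::real) \<in> Cb X" by (rule CbI[where B=0]) auto
  have "L (\<lambda>x. 0 * 0 + 0 * 0) = 0 * L (\<lambda>y. 0) + 0 * L (\<lambda>y. 0)"
    using lin[OF CbB[OF z] CbB[OF z], of 0 0] by simp
  then show ?case using z by simp
next
  case (insert a F)
  then have IH: "(\<lambda>y. \<Sum>x\<in>F. h x y) \<in> Cb X" "L (\<lambda>y. \<Sum>x\<in>F. h x y) = (\<Sum>x\<in>F. L (h x))"
    and ha: "h a \<in> Cb X" by auto
  have e: "(\<lambda>y. \<Sum>x\<in>insert a F. h x y) = (\<lambda>y. 1 * h a y + 1 * (\<Sum>x\<in>F. h x y))"
    using insert(1,2) by simp
  show ?case unfolding e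
    using Cb_lin[OF ha IH(1), of 1 1] lin[OF CbB[OF ha] CbB[OF IH(1)], of 1 1] IH(2) insert(1,2) by simp
qed

lemma cos_prod_step:
  fixes t m :: real
  shows "cos t * cos (m * t) = (1/2) * cos ((m + 1) * t) + (1/2) * cos ((m - 1) * t)"
proof -
  have "cos ((m + 1) * t) = cos (m * t + t)" by (simp add: algebra_simps)
  moreover have "cos ((m - 1) * t) = cos (m * t - t)" by (simp add: algebra_simps)
  ultimately show ?thesis by (simp add: cos_add cos_diff algebra_simps)
qed

lemma cos_power_lemma:
  assumes lin: "\<And>f g a b. f \<in> Brho X \<rho> \<Longrightarrow> g \<in> Brho X \<rho> \<Longrightarrow> L (\<lambda>x. a * f x + b * g x) = a * L f + b * L g"
    and CbB: "\<And>g. g \<in> Cb X \<Longrightarrow> g \<in> Brho X \<rho>"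
    and G: "G \<in> Cb X"
    and hc: "\<And>a d. L (\<lambda>y. cos (a * G y - d)) = cos (a * L G - d)"
    and z: "a * L G - d = 0"
  shows "L (\<lambda>y. cos (a * G y - d) ^ k * cos ((m * a) * G y - m * d)) = 1"
proof (induction k arbitrary: m)
  case 0
  have "m * a * L G - m * d = m * (a * L G - d)" by (simp add: algebra_simps)
  also have "\<dots> = 0" using z by simp
  finally have "m * a * L G - m * d = 0" .
  then have "cos (m * a * L G - m * d) = 1" by (simp only: cos_zero)
  moreover have "L (\<lambda>y. cos (a * G y - d) ^ 0 * cos ((m * a) * G y - m * d)) = L (\<lambda>y. cos (m * a * G y - m * d))"
    by simp
  ultimately show ?case using hc[of "m * a" "m * d"] by argo
next
  case (Suc k)
  let ?f1 = "\<lambda>y. cos (a * G y - d) ^ k * cos (((m + 1) * a) * G y - (m + 1) * d)"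
  let ?f2 = "\<lambda>y. cos (a * G y - d) ^ k * cos (((m - 1) * a) * G y - (m - 1) * d)"
  have e: "(\<lambda>y. cos (a * G y - d) ^ Suc k * cos ((m * a) * G y - m * d)) = (\<lambda>y. (1/2) * ?f1 y + (1/2) * ?f2 y)"
  proof
    fix y
    have a1: "(m * a) * G y - m * d = m * (a * G y - d)"
      and a2: "((m + 1) * a) * G y - (m + 1) * d = (m + 1) * (a * G y - d)"
      and a3: "((m - 1) * a) * G y - (m - 1) * d = (m - 1) * (a * G y - d)"
      by (simp_all add: algebra_simps)
    show "cos (a * G y - d) ^ Suc k * cos ((m * a) * G y - m * d) = (1/2) * ?f1 y + (1/2) * ?f2 y"
    proof -
      let ?t = "a * G y - d"
      have "cos ?t ^ Suc k * cos (m * ?t) = cos ?t ^ k * (cos ?t * cos (m * ?t))" by (simp only: power_Suc mult_ac)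
      also have "\<dots> = cos ?t ^ k * ((1/2) * cos ((m+1)*?t) + (1/2)*cos((m-1)*?t))" by (simp only: cos_prod_step)
      also have "\<dots> = (1/2) * (cos ?t^k * cos ((m+1)*?t)) + (1/2)*(cos ?t^k * cos((m-1)*?t))" by (simp only: distrib_left mult_ac)
      finally show ?thesis by (simp only: a1 a2 a3)
    qed
  qed
  have f1: "?f1 \<in> Cb X" and f2: "?f2 \<in> Cb X" using Cb_cos_pow[OF G] by blast+
  show ?case unfolding e
    using lin[OF CbB[OF f1] CbB[OF f2], of "1/2" "1/2"] Suc.IH[of "m+1"] Suc.IH[of "m-1"] by simp
qed



theorem mainTheorem13:
  fixes X :: "'a topology" and \<rho> :: "'a \<Rightarrow> real" and L :: "('a \<Rightarrow> real) \<Rightarrow> real"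
  assumes "weighted_space X \<rho>"
    and "cont_lin_functional X \<rho> L"
  shows "(smooth_alg_hom X \<rho> L \<longleftrightarrow>
            (\<exists>x\<in>topspace X. \<forall>f\<in>Brho X \<rho>. L f = f x)) \<and>
         (\<forall>x\<in>topspace X. \<forall>y\<in>topspace X.
            (\<forall>f\<in>Brho X \<rho>. L f = f x) \<and> (\<forall>f\<in>Brho X \<rho>. L f = f y) \<longrightarrow> x = y)"
proof -
  let ?E = "topspace X"
  from assms(1) have cr: "completely_regular_space X" and hd: "Hausdorff_space X"
    and rpos: "\<And>x. x \<in> ?E \<Longrightarrow> \<rho> x > 0"
    and cpt: "\<And>R. R \<ge> 0 \<Longrightarrow> compactin X {x \<in> ?E. \<rho> x \<le> R}"
    unfolding weighted_space_def by auto
  from assms(2) have lin: "\<And>f g a b. f \<in> Brho X \<rho> \<Longrightarrow> g \<in> Brho X \<rho> \<Longrightarrow> L (\<lambda>x. a * f x + b * g x) = a * L f + b * L g"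
    unfolding cont_lin_functional_def by blast
  from assms(2) obtain C where CC: "\<And>f. f \<in> Brho X \<rho> \<Longrightarrow> \<bar>L f\<bar> \<le> C * wnorm X \<rho> f"
    unfolding cont_lin_functional_def by blast
  obtain r where r0: "r > 0" and rle: "\<And>x. x \<in> ?E \<Longrightarrow> r \<le> \<rho> x"
  proof -
    define V where "V n = ?E - {x \<in> ?E. \<rho> x \<le> 1 / real (Suc n)}" for n
    have opV: "openin X (V n)" for n
      unfolding V_def by (intro openin_diff openin_topspace compactin_imp_closedin hd cpt) simp
    have cov: "{x \<in> ?E. \<rho> x \<le> 1} \<subseteq> \<Union>(range V)"
    proof
      fix x assume x: "x \<in> {x \<in> ?E. \<rho> x \<le> 1}"
      then have "\<rho> x > 0" using rpos by auto
      then obtain n where "inverse (real (Suc n)) < \<rho> x" using reals_Archimedean by blast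
      then have "x \<in> V n" using x unfolding V_def by (auto simp: inverse_eq_divide)
      then show "x \<in> \<Union>(range V)" by blast
    qed
    from cpt[of 1] have "compactin X {x \<in> ?E. \<rho> x \<le> 1}" by simp
    then have cpt1: "\<forall>\<U>. (\<forall>U \<in> \<U>. openin X U) \<and> {x \<in> ?E. \<rho> x \<le> 1} \<subseteq> \<Union>\<U> \<longrightarrow>
          (\<exists>\<F>. finite \<F> \<and> \<F> \<subseteq> \<U> \<and> {x \<in> ?E. \<rho> x \<le> 1} \<subseteq> \<Union>\<F>)" unfolding compactin_def by blast
    have cvr: "(\<forall>U \<in> range V. openin X U) \<and> {x \<in> ?E. \<rho> x \<le> 1} \<subseteq> \<Union>(range V)"
      using opV cov by blast
    from cpt1[rule_format, OF cvr] obtain \<F> where F: "finite \<F>" "\<F> \<subseteq> range V" "{x \<in> ?E. \<rho> x \<le> 1} \<subseteq> \<Union>\<F>"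
      by blast
    from finite_subset_image[OF F(1,2)] obtain Ns where Ns: "finite Ns" "\<F> = V ` Ns" by blast
    define N where "N = Max (insert 0 Ns)"
    have NN: "n \<le> N" if "n \<in> Ns" for n unfolding N_def using Ns(1) that by simp
    show ?thesis
    proof (rule that[of "1 / real (Suc N)"])
      show "0 < 1 / real (Suc N)" by simp
      fix x assume x: "x \<in> ?E"
      show "1 / real (Suc N) \<le> \<rho> x"
      proof (cases "\<rho> x \<le> 1")
        case True
        then obtain n where n: "n \<in> Ns" "x \<in> V n" using F(3) Ns(2) x by blast
        then have "\<rho> x > 1 / real (Suc n)" unfolding V_def by auto
        moreover have "1 / real (Suc N) \<le> 1 / real (Suc n)" using NN[OF n(1)]
          by (intro divide_left_mono) auto
        ultimately show ?thesis by linarith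
      next
        case False
        moreover have "1 / real (Suc N) \<le> 1" by simp
        ultimately show ?thesis by linarith
      qed
    qed
  qed
  have CbB: "g \<in> Brho X \<rho>" if g: "g \<in> Cb X" for g
  proof -
    obtain B where B: "\<forall>x\<in>?E. \<bar>g x\<bar> \<le> B" using CbD(2)[OF g] by blast
    have "wbounded X \<rho> g"
    proof (rule wboundedI[where B="B / r"])
      fix x assume x: "x \<in> ?E"
      show "\<rho> x > 0" using rpos x .
      have "\<bar>g x\<bar> / \<rho> x \<le> \<bar>g x\<bar> / r" using rle[OF x] r0 by (intro divide_left_mono) auto
      also have "\<dots> \<le> B / r" using B x r0 by (intro divide_right_mono) auto
      finally show "\<bar>g x\<bar> / \<rho> x \<le> B / r" .
    qed
    moreover have "wbounded X \<rho> (\<lambda>x. g x - g x)" by (rule wboundedI[where B=0]) (auto simp: rpos)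
    moreover have "wnorm X \<rho> (\<lambda>x. g x - g x) \<le> 0" by (rule wnorm_le) auto
    ultimately show ?thesis unfolding Brho_def using g by force
  qed
  have Cb_diff: "(\<lambda>x. f x - g x) \<in> Cb X" if "f \<in> Cb X" "g \<in> Cb X" for f g
    using Cb_lin[OF that, of 1 "-1"] by simp
  have wbB: "\<exists>B. \<forall>x\<in>?E. \<bar>f x\<bar> / \<rho> x \<le> B" if "wbounded X \<rho> f" for f
    using that unfolding wbounded_iff by (meson abs_ge_self order_trans)
  have sub: "(\<lambda>x. f x - g x) \<in> Brho X \<rho>" if f: "f \<in> Brho X \<rho>" and g: "g \<in> Cb X" for f g
  proof -
    from f have "wbounded X \<rho> f" unfolding Brho_def by blast
    then obtain B1 where B1: "\<forall>x\<in>?E. \<bar>f x\<bar> / \<rho> x \<le> B1" using wbB by blast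
    from CbB[OF g] have "wbounded X \<rho> g" unfolding Brho_def by blast
    then obtain B2 where B2: "\<forall>x\<in>?E. \<bar>g x\<bar> / \<rho> x \<le> B2" using wbB by blast
    have wb: "wbounded X \<rho> (\<lambda>x. f x - g x)"
    proof (rule wboundedI[where B="B1 + B2"])
      fix x assume x: "x \<in> ?E"
      show "\<rho> x > 0" using rpos x .
      have "\<bar>f x - g x\<bar> / \<rho> x \<le> (\<bar>f x\<bar> + \<bar>g x\<bar>) / \<rho> x"
        using rpos[OF x] by (intro divide_right_mono) auto
      also have "\<dots> = \<bar>f x\<bar> / \<rho> x + \<bar>g x\<bar> / \<rho> x" by (simp add: add_divide_distrib)
      also have "\<dots> \<le> B1 + B2" using B1 B2 x by (intro add_mono) auto
      finally show "\<bar>f x - g x\<bar> / \<rho> x \<le> B1 + B2" .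
    qed
    have "\<exists>h\<in>Cb X. wbounded X \<rho> (\<lambda>x. (f x - g x) - h x) \<and> wnorm X \<rho> (\<lambda>x. (f x - g x) - h x) < e"
      if e: "e > 0" for e
    proof -
      from f e obtain g' where g': "g' \<in> Cb X" "wbounded X \<rho> (\<lambda>x. f x - g' x)" "wnorm X \<rho> (\<lambda>x. f x - g' x) < e"
        unfolding Brho_def by blast
      have eq: "(\<lambda>x. (f x - g x) - (g' x - g x)) = (\<lambda>x. f x - g' x)" by simp
      show ?thesis
        by (rule bexI[of _ "\<lambda>x. g' x - g x"]) (use g' Cb_diff[OF g'(1) g] eq in auto)
    qed
    then show ?thesis unfolding Brho_def using wb by blast
  qed
  have Ldiff: "L (\<lambda>x. f x - g x) = L f - L g" if "f \<in> Brho X \<rho>" "g \<in> Brho X \<rho>" for f g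
    using lin[OF that, of 1 "-1"] by simp
  have evalCb: "\<forall>f\<in>Brho X \<rho>. L f = f x" if x: "x \<in> ?E" and ev: "\<forall>g\<in>Cb X. L g = g x" for x
  proof
    fix f assume f: "f \<in> Brho X \<rho>"
    show "L f = f x"
    proof (rule ccontr)
      assume ne: "L f \<noteq> f x"
      have px: "\<rho> x > 0" using rpos[OF x] .
      define e where "e = \<bar>L f - f x\<bar> / (2 * (\<bar>C\<bar> + \<rho> x))"
      have e0: "e > 0" using ne px unfolding e_def by (intro divide_pos_pos) auto
      obtain g where g: "g \<in> Cb X" "wbounded X \<rho> (\<lambda>y. f y - g y)" "wnorm X \<rho> (\<lambda>y. f y - g y) < e"
        using f e0 unfolding Brho_def by blast
      have fg: "(\<lambda>y. f y - g y) \<in> Brho X \<rho>" using sub f g(1) by blast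
      have wn0: "0 \<le> wnorm X \<rho> (\<lambda>y. f y - g y)" using wnorm_nonneg[OF g(2)] .
      have "\<bar>L f - L g\<bar> \<le> C * wnorm X \<rho> (\<lambda>y. f y - g y)"
        using CC[OF fg] Ldiff[OF f CbB[OF g(1)]] by simp
      also have "\<dots> \<le> \<bar>C\<bar> * wnorm X \<rho> (\<lambda>y. f y - g y)" using wn0 by (intro mult_right_mono) auto
      also have "\<dots> \<le> \<bar>C\<bar> * e" using g(3) by (intro mult_left_mono) auto
      finally have A: "\<bar>L f - L g\<bar> \<le> \<bar>C\<bar> * e" .
      have "\<bar>f x - g x\<bar> / \<rho> x \<le> wnorm X \<rho> (\<lambda>y. f y - g y)" using wnorm_ge[OF g(2) x] by simp
      then have "\<bar>f x - g x\<bar> \<le> \<rho> x * wnorm X \<rho> (\<lambda>y. f y - g y)" using px by (simp add: divide_le_eq mult.commute)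
      also have "\<dots> \<le> \<rho> x * e" using g(3) px by (intro mult_left_mono) auto
      finally have B: "\<bar>f x - g x\<bar> \<le> \<rho> x * e" .
      have Lg: "L g = g x" using ev g(1) by blast
      have "\<bar>L f - f x\<bar> \<le> \<bar>L f - L g\<bar> + \<bar>f x - g x\<bar>" using Lg by linarith
      also have "\<dots> \<le> (\<bar>C\<bar> + \<rho> x) * e" using A B by (simp add: algebra_simps)
      also have "\<dots> = \<bar>L f - f x\<bar> / 2" unfolding e_def using px by (simp add: field_simps)
      finally show False using ne by simp
    qed
  qed
  have uniq: "\<forall>x\<in>?E. \<forall>y\<in>?E. (\<forall>f\<in>Brho X \<rho>. L f = f x) \<and> (\<forall>f\<in>Brho X \<rho>. L f = f y) \<longrightarrow> x = y"
  proof (intro ballI impI)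
    fix x y assume x: "x \<in> ?E" and y: "y \<in> ?E" and h: "(\<forall>f\<in>Brho X \<rho>. L f = f x) \<and> (\<forall>f\<in>Brho X \<rho>. L f = f y)"
    show "x = y"
    proof (rule ccontr)
      assume xy: "x \<noteq> y"
      have cy: "closedin X {y}" using closedin_t1_singleton[OF Hausdorff_imp_t1_space[OF hd] y] .
      have xy': "x \<in> ?E - {y}" using x xy by auto
      have "\<exists>f::'a\<Rightarrow>real. continuous_map X (top_of_set {0..1}) f \<and> f x = 0 \<and> f ` {y} \<subseteq> {1}"
        using cr[unfolded completely_regular_space_def, rule_format, OF conjI[OF cy xy']] .
      then obtain f :: "'a \<Rightarrow> real" where f0: "continuous_map X (top_of_set {0..1}) f \<and> f x = 0 \<and> f ` {y} \<subseteq> {1}" ..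
      have f: "continuous_map X (top_of_set {0..1}) f" "f x = 0" "f y = 1" using f0 by auto
      have fc: "continuous_map X euclideanreal f" and fr: "f ` ?E \<subseteq> {0..1}"
        using f(1) unfolding continuous_map_in_subtopology by auto
      have "f \<in> Cb X" using fc fr by (intro CbI[where B=1]) auto
      then have "f \<in> Brho X \<rho>" by (rule CbB)
      then have "f x = f y" using h by metis
      then show False using f by simp
    qed
  qed
  have bck: "smooth_alg_hom X \<rho> L" if "\<exists>x\<in>?E. \<forall>f\<in>Brho X \<rho>. L f = f x"
  proof -
    from that obtain x where x: "x \<in> ?E" and ev: "\<forall>f\<in>Brho X \<rho>. L f = f x" by blast
    show ?thesis unfolding smooth_alg_hom_def
    proof (intro allI impI)
      fix n \<phi> and fs :: "nat \<Rightarrow> 'a \<Rightarrow> real"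
      assume a: "smooth_fun n \<phi> \<and> bounded (range \<phi>) \<and> (\<forall>i<n. fs i \<in> Brho X \<rho>) \<and> (\<lambda>x. \<phi> (\<lambda>i. fs i x)) \<in> Brho X \<rho>"
      then have r: "\<And>v. \<phi> v = \<phi> (restr n v)" unfolding smooth_fun_def by blast
      have "restr n (\<lambda>i. fs i x) = restr n (\<lambda>i. L (fs i))"
        using a ev unfolding restr_def by auto
      then have "\<phi> (\<lambda>i. fs i x) = \<phi> (\<lambda>i. L (fs i))" by (metis r)
      then show "L (\<lambda>x. \<phi> (\<lambda>i. fs i x)) = \<phi> (\<lambda>i. L (fs i))" using a ev by simp
    qed
  qed
  have forth: "\<exists>x\<in>?E. \<forall>f\<in>Brho X \<rho>. L f = f x" if hom: "smooth_alg_hom X \<rho> L"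
  proof (rule ccontr)
    assume nex: "\<not> (\<exists>x\<in>?E. \<forall>f\<in>Brho X \<rho>. L f = f x)"
    from hom have H: "\<And>n \<phi> fs. smooth_fun n \<phi> \<and> bounded (range \<phi>) \<and> (\<forall>i<n. fs i \<in> Brho X \<rho>) \<and>
        (\<lambda>x. \<phi> (\<lambda>i. fs i x)) \<in> Brho X \<rho> \<Longrightarrow> L (\<lambda>x. \<phi> (\<lambda>i. fs i x)) = \<phi> (\<lambda>i. L (fs i))"
      unfolding smooth_alg_hom_def by blast
    have homcos: "L (\<lambda>y. cos (a * g y - d)) = cos (a * L g - d)" if g: "g \<in> Cb X" for g a d
    proof -
      have bd: "bounded (range (\<lambda>v::nat\<Rightarrow>real. cos (a * v 0 - d)))"
        unfolding bounded_real by (rule exI[of _ 1]) auto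
      have "smooth_fun 1 (\<lambda>v. cos (a * v 0 - d)) \<and> bounded (range (\<lambda>v::nat\<Rightarrow>real. cos (a * v 0 - d))) \<and>
        (\<forall>i<1. (\<lambda>i. g) i \<in> Brho X \<rho>) \<and> (\<lambda>x. (\<lambda>v. cos (a * v 0 - d)) (\<lambda>i. (\<lambda>i. g) i x)) \<in> Brho X \<rho>"
        using smooth_cos bd CbB[OF g] CbB[OF Cb_cos[OF g]] by auto
      from H[OF this] show ?thesis by simp
    qed
    have "\<forall>x\<in>?E. \<exists>g\<in>Cb X. L g \<noteq> g x" using nex evalCb by blast
    then obtain gg where gg: "\<And>x. x \<in> ?E \<Longrightarrow> gg x \<in> Cb X \<and> L (gg x) \<noteq> gg x x" by metis
    define dd where "dd x = gg x x - L (gg x)" for x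
    define u where "u x = (\<lambda>y. cos ((1 / dd x) * gg x y - L (gg x) / dd x))" for x
    have uCb: "u x \<in> Cb X" if "x \<in> ?E" for x unfolding u_def using Cb_cos gg[OF that] by blast
    have Lu: "L (u x) = 1" if "x \<in> ?E" for x
    proof -
      have "L (u x) = cos ((1 / dd x) * L (gg x) - L (gg x) / dd x)" unfolding u_def using homcos gg[OF that] by blast
      also have "\<dots> = 1" by simp
      finally show ?thesis .
    qed
    have uxx: "u x x = cos (1::real)" if "x \<in> ?E" for x
    proof -
      have "dd x \<noteq> 0" using gg[OF that] unfolding dd_def by simp
      have "(1 / dd x) * gg x x - L (gg x) / dd x = (gg x x - L (gg x)) / dd x" by (simp add: diff_divide_distrib)
      also have "\<dots> = 1" using \<open>dd x \<noteq> 0\<close> unfolding dd_def by simp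
      finally have "(1 / dd x) * gg x x - L (gg x) / dd x = 1" .
      then show ?thesis unfolding u_def by simp
    qed
    have ub: "\<bar>u x y\<bar> \<le> 1" for x y unfolding u_def by simp
    define \<kappa> where "\<kappa> = (1 + cos (1::real)) / 2"
    have cos1: "cos (1::real) < 1" using cos_mono_less_eq[of 1 0] pi_gt3 by simp
    have cos1p: "0 < cos (1::real)" using cos_gt_zero[of 1] pi_gt3 by simp
    have k1: "cos (1::real) < \<kappa>" "\<kappa> < 1" "0 < \<kappa>" using cos1 cos1p unfolding \<kappa>_def by auto
    define W where "W x = {y \<in> ?E. u x y \<in> {..<\<kappa>}}" for x
    have opW: "openin X (W x)" if "x \<in> ?E" for x
      unfolding W_def using CbD(1)[OF uCb[OF that]] by (rule openin_continuous_map_preimage) simp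
    define R where "R = 2 * \<bar>C\<bar> + 1"
    have R0: "R > 0" "R \<ge> 0" unfolding R_def by auto
    define K where "K = {x \<in> ?E. \<rho> x \<le> R}"
    have cK: "compactin X K" unfolding K_def using cpt R0 by simp
    have cvK: "(\<forall>U \<in> W ` ?E. openin X U) \<and> K \<subseteq> \<Union>(W ` ?E)"
    proof
      show "\<forall>U \<in> W ` ?E. openin X U" using opW by blast
      show "K \<subseteq> \<Union>(W ` ?E)"
      proof
        fix y assume "y \<in> K"
        then have y: "y \<in> ?E" unfolding K_def by simp
        then have "y \<in> W y" unfolding W_def using uxx[OF y] k1 by simp
        then show "y \<in> \<Union>(W ` ?E)" using y by blast
      qed
    qed
    from cK have cK1: "\<forall>\<U>. (\<forall>U \<in> \<U>. openin X U) \<and> K \<subseteq> \<Union>\<U> \<longrightarrow> (\<exists>\<F>. finite \<F> \<and> \<F> \<subseteq> \<U> \<and> K \<subseteq> \<Union>\<F>)"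
      unfolding compactin_def by blast
    from cK1[rule_format, OF cvK] obtain \<F> where FF: "finite \<F>" "\<F> \<subseteq> W ` ?E" "K \<subseteq> \<Union>\<F>" by blast
    from finite_subset_image[OF FF(1,2)] obtain F where F0: "F \<subseteq> ?E" "finite F" "\<F> = W ` F" by blast
    have F: "F \<subseteq> ?E" "finite F" "K \<subseteq> \<Union>(W ` F)" using F0 FF(3) by auto
    define G where "G = (\<lambda>y. \<Sum>x\<in>F. u x y)"
    define M where "M = real (card F)"
    have M0: "M \<ge> 0" unfolding M_def by simp
    have SL: "(\<lambda>y. \<Sum>x\<in>F. u x y) \<in> Cb X \<and> L (\<lambda>y. \<Sum>x\<in>F. u x y) = (\<Sum>x\<in>F. L (u x))"
      using Cb_sum_lin[where X=X and \<rho>=\<rho> and L=L and F=F and h=u, OF lin CbB F(2)] uCb F(1) by blast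
    then have GCb: "G \<in> Cb X" and LG0: "L G = (\<Sum>x\<in>F. L (u x))" unfolding G_def by auto
    have "(\<Sum>x\<in>F. L (u x)) = (\<Sum>x\<in>F. 1)" using Lu F(1) by (intro sum.cong) auto
    then have LG: "L G = M" unfolding LG0 M_def by simp
    have Gb: "\<bar>G y\<bar> \<le> M" for y
    proof -
      have "\<bar>G y\<bar> \<le> (\<Sum>x\<in>F. \<bar>u x y\<bar>)" unfolding G_def by (rule sum_abs)
      also have "\<dots> \<le> (\<Sum>x\<in>F. 1)" by (intro sum_mono ub)
      finally show ?thesis unfolding M_def by simp
    qed
    define \<delta> where "\<delta> = 1 - \<kappa>"
    have d0: "\<delta> > 0" "\<delta> < 1" unfolding \<delta>_def using k1 by auto
    have GK: "G y \<le> M - \<delta>" if "y \<in> K" for y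
    proof -
      from F(3) that obtain x0 where x0: "x0 \<in> F" "y \<in> W x0" by blast
      then have ux0: "u x0 y < \<kappa>" unfolding W_def by simp
      have "G y = u x0 y + (\<Sum>x\<in>F - {x0}. u x y)" unfolding G_def using F(2) x0(1) by (simp add: sum.remove)
      also have "(\<Sum>x\<in>F - {x0}. u x y) \<le> (\<Sum>x\<in>F - {x0}. 1)"
        using ub by (intro sum_mono) (simp add: abs_le_iff)
      also have "(\<Sum>x\<in>F - {x0}. (1::real)) = M - 1"
      proof -
        have "card F \<noteq> 0" using F(2) x0(1) by auto
        then have cF: "Suc 0 \<le> card F" by simp
        show ?thesis unfolding M_def using F(2) x0(1) cF by (simp add: card_Diff_singleton of_nat_diff)
      qed
      finally show ?thesis using ux0 unfolding \<delta>_def by simp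
    qed
    define b where "b = 1 / (2 * M + 2)"
    have b0: "b > 0" unfolding b_def using M0 by simp
    have bM: "2 * b * M \<le> 1" unfolding b_def using M0 by (simp add: field_simps)
    have bl: "b \<le> 1/2" unfolding b_def using M0 by (simp add: field_simps)
    define a where "a = - b"
    define d where "d = - b * M"
    have th_eq: "a * G y - d = b * (M - G y)" for y unfolding a_def d_def by (simp add: algebra_simps)
    have th0: "0 \<le> a * G y - d" for y unfolding th_eq using b0 Gb[of y] by simp
    have th1: "a * G y - d \<le> 1" for y
    proof -
      have "b * (M - G y) \<le> b * (2 * M)" using b0 Gb[of y] by (intro mult_left_mono) auto
      then show ?thesis unfolding th_eq using bM by simp
    qed
    have thK: "b * \<delta> \<le> a * G y - d" if "y \<in> K" for y
      unfolding th_eq using GK[OF that] b0 by (intro mult_left_mono) auto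
    have z: "a * L G - d = 0" unfolding LG a_def d_def by simp
    define q where "q = cos (b * \<delta>)"
    have bd1: "b * \<delta> \<le> 1"
    proof -
      have "b * \<delta> \<le> (1/2) * 1" using bl d0 b0 by (intro mult_mono) auto
      then show ?thesis by simp
    qed
    have bdp: "0 < b * \<delta>" using b0 d0 by simp
    have q0: "0 \<le> q" unfolding q_def by (intro cos_ge_zero; use bdp bd1 pi_gt3 in linarith)
    have q1: "q < 1" unfolding q_def using cos_mono_less_eq[of "b * \<delta>" 0] b0 d0 bd1 pi_gt3 by simp
    have rR: "r / R > 0" using r0 R0 by simp
    have "(\<lambda>n. q ^ n) \<longlonglongrightarrow> 0" using q0 q1 by (intro LIMSEQ_power_zero) simp
    from order_tendstoD(2)[OF this rR] obtain N where N: "q ^ N < r / R"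
      by (auto simp: eventually_sequentially)
    define P where "P = (\<lambda>y. cos (a * G y - d) ^ N * cos ((0 * a) * G y - 0 * d))"
    have LP: "L P = 1" unfolding P_def
      by (rule cos_power_lemma[where X=X and \<rho>=\<rho> and L=L and G=G, OF lin CbB GCb homcos[OF GCb] z])
    have PB: "P \<in> Brho X \<rho>" using CbB Cb_cos_pow[OF GCb] unfolding P_def by blast
    have Pval: "P y = cos (a * G y - d) ^ N" for y unfolding P_def by simp
    have wP: "wnorm X \<rho> P \<le> 1 / R"
    proof (rule wnorm_le)
      fix y assume y: "y \<in> ?E"
      let ?c = "cos (a * G y - d)"
      have c0: "0 \<le> ?c" using th0[of y] th1[of y] pi_gt3 by (intro cos_ge_zero) auto
      have c1: "?c \<le> 1" by simp
      have Pn: "\<bar>P y\<bar> = ?c ^ N" unfolding Pval using c0 by simp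
      have py: "\<rho> y > 0" using rpos[OF y] .
      show "\<bar>P y\<bar> / \<rho> y \<le> 1 / R"
      proof (cases "\<rho> y \<le> R")
        case True
        then have yK: "y \<in> K" unfolding K_def using y by simp
        have "?c \<le> q" unfolding q_def using cos_mono_le_eq[of "a * G y - d" "b * \<delta>"] thK[OF yK] th0[of y] th1[of y] b0 d0 bd1 pi_gt3
          by simp
        then have "?c ^ N \<le> q ^ N" using c0 by (intro power_mono) auto
        then have "\<bar>P y\<bar> / \<rho> y \<le> q ^ N / r" unfolding Pn using rle[OF y] r0 c0 q0
          by (intro frac_le) auto
        also have "\<dots> \<le> (r / R) / r" using N r0 by (intro divide_right_mono) auto
        also have "\<dots> = 1 / R" using r0 by simp
        finally show ?thesis .
      next
        case False
        have "?c ^ N \<le> 1" using c0 c1 by (intro power_le_one) auto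
        then have "\<bar>P y\<bar> / \<rho> y \<le> 1 / R" unfolding Pn using False R0 c0 py
          by (intro frac_le) auto
        then show ?thesis .
      qed
    qed (use R0 in simp)
    have wbP: "wbounded X \<rho> P" using PB unfolding Brho_def by blast
    have "1 \<le> C * wnorm X \<rho> P" using CC[OF PB] LP by simp
    also have "\<dots> \<le> \<bar>C\<bar> * wnorm X \<rho> P" using wnorm_nonneg[OF wbP] by (intro mult_right_mono) auto
    also have "\<dots> \<le> \<bar>C\<bar> * (1 / R)" using wP by (intro mult_left_mono) auto
    also have "\<dots> < 1" unfolding R_def by (simp add: field_simps)
    finally show False by simp
  qed
  show ?thesis using uniq bck forth by blast
qed


end
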